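(* Let $M,N\ge 0$ be integers, $a_0,\dots,a_M\in\mathbb{R}$, $f_M(x)=\sum_{m=0}^M a_mT_m(x)$. For $0\le n\le N$ and $y\in[-1,1]$ let $\tilde R_n(y)=\int_{-1}^{y}f_M(y-1-t)T_n(t)\,\mathrm{d}t=\sum_{k=0}^{M+N+1}R_{k,n}T_k(y)$. Then for all integers $k,n$ with $M+1\le k,n\le N$, $$R_{n,k}=\frac{(-1)^{n+k}\,k}{n}\,R_{k,n}.$$
   Context: $T_m(x)=\cos(m\arccos x)$ is the $m$-th Chebyshev polynomial; $R=(R_{k,n})_{0\le k\le M+N+1,\,0\le n\le N}$ is the matrix of Chebyshev coefficients of the convolutions $\tilde R_n$ (the Chebyshev convolution matrix of $f_M$). *)

theory Defs
  imports "HOL-Analysis.Analysis"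
begin

definition chebT :: "nat \<Rightarrow> real \<Rightarrow> real" where
  "chebT m x = cos (real m * arccos x)"

definition fM :: "(nat \<Rightarrow> real) \<Rightarrow> nat \<Rightarrow> real \<Rightarrow> real" where
  "fM a M x = (\<Sum>m\<le>M. a m * chebT m x)"

definition Rtilde :: "(nat \<Rightarrow> real) \<Rightarrow> nat \<Rightarrow> nat \<Rightarrow> real \<Rightarrow> real" where
  "Rtilde a M n y = integral {-1..y} (\<lambda>t. fM a M (y - 1 - t) * chebT n t)"

end

theory Submission
  imports Defs "HOL-Computational_Algebra.Polynomial"
begin

definition pX :: "real poly" where "pX = [:0,1:]"

fun Tp :: "nat \<Rightarrow> real poly" where
  "Tp 0 = 1"
| "Tp (Suc 0) = pX"
| "Tp (Suc (Suc n)) = 2 * pX * Tp (Suc n) - Tp n"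

fun Up :: "nat \<Rightarrow> real poly" where
  "Up 0 = 1"
| "Up (Suc 0) = 2 * pX"
| "Up (Suc (Suc n)) = 2 * pX * Up (Suc n) - Up n"

lemma poly_pX[simp]: "poly pX x = x" by (simp add: pX_def)
lemma pderiv_pX[simp]: "pderiv pX = 1" by (simp add: pX_def pderiv_pCons)

lemma chebT_Tp: "x \<in> {-1..1} \<Longrightarrow> chebT n x = poly (Tp n) x"
proof (induction n rule: Tp.induct)
  case 1 then show ?case by (simp add: chebT_def)
next
  case 2 then show ?case by (simp add: chebT_def)
next
  case (3 n)
  let ?t = "arccos x"
  have "cos (real (Suc (Suc n)) * ?t) = 2 * cos ?t * cos (real (Suc n) * ?t) - cos (real n * ?t)"
  proof -
    have a: "real (Suc (Suc n)) * ?t = real (Suc n) * ?t + ?t" by (simp add: algebra_simps)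
    have b: "real n * ?t = real (Suc n) * ?t - ?t" by (simp add: algebra_simps)
    show ?thesis unfolding a b cos_add cos_diff by simp
  qed
  then show ?case using 3 by (simp add: chebT_def)
qed

lemma TU_rel: "Tp (Suc (Suc n)) = pX * Up (Suc n) - Up n \<and>
   Tp (Suc (Suc (Suc n))) = pX * Up (Suc (Suc n)) - Up (Suc n)"
proof (induction n)
  case 0 then show ?case by (simp add: algebra_simps)
next
  case (Suc n)
  have e1: "Tp (Suc (Suc (Suc (Suc n)))) = 2 * pX * Tp (Suc (Suc (Suc n))) - Tp (Suc (Suc n))"
    by simp
  have e2: "Up (Suc (Suc (Suc (Suc n)))) = 2 * pX * Up (Suc (Suc (Suc n))) - Up (Suc (Suc n))"
    by simp
  have e3: "Up (Suc (Suc (Suc n))) = 2 * pX * Up (Suc (Suc n)) - Up (Suc n)"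
    by simp
  from Suc show ?case unfolding e1 e2 by (simp only: e3) (simp add: algebra_simps)
qed

lemma UU_rel: "Up (Suc (Suc n)) - Up n = 2 * Tp (Suc (Suc n)) \<and>
   Up (Suc (Suc (Suc n))) - Up (Suc n) = 2 * Tp (Suc (Suc (Suc n)))"
proof (induction n)
  case 0 then show ?case by (simp add: algebra_simps)
next
  case (Suc n)
  have e1: "Tp (Suc (Suc (Suc (Suc n)))) = 2 * pX * Tp (Suc (Suc (Suc n))) - Tp (Suc (Suc n))"
    by simp
  have e2: "Up (Suc (Suc (Suc (Suc n)))) = 2 * pX * Up (Suc (Suc (Suc n))) - Up (Suc (Suc n))"
    by simp
  have e3: "Up (Suc (Suc n)) = 2 * pX * Up (Suc n) - Up n"
    by simp
  from Suc have h1: "Up (Suc (Suc (Suc n))) - Up (Suc n) = 2 * Tp (Suc (Suc (Suc n)))" by blast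
  from Suc have h0: "Up (Suc (Suc n)) - Up n = 2 * Tp (Suc (Suc n))" by blast
  have "Up (Suc (Suc (Suc (Suc n)))) - Up (Suc (Suc n)) = 2 * pX * (Up (Suc (Suc (Suc n))) - Up (Suc n)) - (Up (Suc (Suc n)) - Up n)"
    unfolding e2 by (simp only: e3) (simp add: algebra_simps)
  also have "\<dots> = 2 * Tp (Suc (Suc (Suc (Suc n))))" unfolding h1 h0 e1 by (simp add: algebra_simps)
  finally show ?case using h1 by blast
qed

lemma pderiv_2pX: "pderiv (2 * pX * p) = 2 * p + 2 * pX * pderiv p"
proof -
  have s2: "\<And>q::real poly. 2 * q = smult 2 q" by (simp add: numeral_mult_conv_smult)
  have "pderiv (2 * pX * p) = pderiv (2 * (pX * p))" by (simp add: mult.assoc)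
  also have "\<dots> = 2 * pderiv (pX * p)" unfolding s2 pderiv_smult ..
  also have "\<dots> = 2 * p + 2 * pX * pderiv p" by (simp add: pderiv_mult algebra_simps)
  finally show ?thesis .
qed

lemma pderiv_Tp: "pderiv (Tp (Suc n)) = of_nat (Suc n) * Up n \<and>
  pderiv (Tp (Suc (Suc n))) = of_nat (Suc (Suc n)) * Up (Suc n)"
proof (induction n)
  case 0 then show ?case by (simp add: pderiv_mult pderiv_diff algebra_simps numeral_eq_Suc)
next
  case (Suc n)
  have t: "Tp (Suc (Suc (Suc n))) = pX * Up (Suc (Suc n)) - Up (Suc n)" using TU_rel by blast
  have e1: "Tp (Suc (Suc (Suc n))) = 2 * pX * Tp (Suc (Suc n)) - Tp (Suc n)" by simp
  have e2: "Up (Suc (Suc n)) = 2 * pX * Up (Suc n) - Up n" by simp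
  from Suc have h1: "pderiv (Tp (Suc n)) = of_nat (Suc n) * Up n"
    and h2: "pderiv (Tp (Suc (Suc n))) = of_nat (Suc (Suc n)) * Up (Suc n)" by blast+
  have t2: "Tp (Suc (Suc n)) = pX * Up (Suc n) - Up n" using TU_rel by blast
  have "pderiv (Tp (Suc (Suc (Suc n)))) = 2 * Tp (Suc (Suc n)) + 2 * pX * pderiv (Tp (Suc (Suc n))) - pderiv (Tp (Suc n))"
    unfolding e1 by (simp only: pderiv_diff pderiv_2pX)
  also have "\<dots> = of_nat (Suc (Suc (Suc n))) * Up (Suc (Suc n))"
    unfolding h1 h2 unfolding t2 e2 by (simp add: algebra_simps)
  finally show ?case using h2 by blast
qed

lemma Tp_m1: "poly (Tp k) (-1) = (-1) ^ k"
  by (induction k rule: Tp.induct) (auto simp: algebra_simps)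

lemma two_pX_mult: "2 * pX * p = pCons 0 (smult 2 p)"
  by (simp add: pX_def numeral_mult_conv_smult)

lemma Tp_coeff: "coeff (Tp n) n = (if n = 0 then 1 else 2 ^ (n - 1)) \<and> degree (Tp n) \<le> n"
proof (induction n rule: Tp.induct)
  case 1 then show ?case by simp
next
  case 2 then show ?case by (simp add: pX_def)
next
  case (3 n)
  have d1: "degree (pCons 0 (smult 2 (Tp (Suc n)))) \<le> Suc (Suc n)"
    using 3 by (metis Suc_le_mono degree_pCons_le degree_smult_le le_trans)
  have d2: "degree (Tp n) \<le> Suc (Suc n)" using 3 by simp
  have "coeff (Tp n) (Suc (Suc n)) = 0" using 3 by (simp add: coeff_eq_0)
  then show ?case using 3 d1 d2
    by (auto simp: two_pX_mult intro: order.trans[OF degree_diff_le])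
qed

lemma Tp_coeff_nz: "coeff (Tp n) n \<noteq> 0"
  using Tp_coeff[of n] by auto

lemma Tp_coeff_0: "i > n \<Longrightarrow> coeff (Tp n) i = 0"
  using Tp_coeff[of n] by (simp add: coeff_eq_0)

definition ev :: "nat \<Rightarrow> nat \<Rightarrow> real" where "ev n i = (if i = n then 1 else 0)"
definition supp_le :: "(nat \<Rightarrow> real) \<Rightarrow> nat \<Rightarrow> bool" where "supp_le v B \<longleftrightarrow> (\<forall>k>B. v k = 0)"
definition cfp :: "nat \<Rightarrow> (nat \<Rightarrow> real) \<Rightarrow> real poly" where "cfp B v = (\<Sum>k\<le>B. smult (v k) (Tp k))"
definition J0 :: "(nat \<Rightarrow> real) \<Rightarrow> nat \<Rightarrow> real" where
  "J0 v k = (if k = 0 then 0 else if k = 1 then v 0 - v 2 / 2 else (v (k - 1) - v (k + 1)) / (2 * real k))"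
definition Jv :: "(nat \<Rightarrow> real) \<Rightarrow> nat \<Rightarrow> real" where
  "Jv v k = (if k = 0 then - (\<Sum>i\<in>{i. J0 v i \<noteq> 0}. J0 v i * (-1) ^ i) else J0 v k)"

lemma J0_ev: "J0 (ev m) k = (if k = Suc m then (if m = 0 then 1 else 1 / (2 * real (Suc m)))
   else if k + 1 = m \<and> k \<ge> 1 then - 1 / (2 * real k) else 0)"
  unfolding J0_def ev_def by auto

lemma sum_smult_delta: "finite S \<Longrightarrow> (\<Sum>k\<in>S. smult (if k = a then c else 0) (P k)) = (if a \<in> S then smult c (P a) else 0)"
  by (simp add: if_distrib[of "\<lambda>c. smult c _"] cong: if_cong)

lemma basis_deriv:
  assumes "m \<le> B"
  shows "(\<Sum>k\<le>Suc B. smult (J0 (ev m) k) (pderiv (Tp k))) = Tp m"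
proof (cases m)
  case 0
  have "(\<Sum>k\<le>Suc B. smult (J0 (ev m) k) (pderiv (Tp k))) = (\<Sum>k\<le>Suc B. smult (if k = 1 then 1 else 0) (pderiv (Tp k)))"
    by (rule sum.cong) (auto simp: J0_ev 0)
  also have "\<dots> = Tp m" by (subst sum_smult_delta) (auto simp: 0)
  finally show ?thesis .
next
  case (Suc n)
  note mS = Suc
  show ?thesis
  proof (cases n)
    case 0
    have "(\<Sum>k\<le>Suc B. smult (J0 (ev m) k) (pderiv (Tp k))) = (\<Sum>k\<le>Suc B. smult (if k = 2 then 1/4 else 0) (pderiv (Tp k)))"
      by (rule sum.cong) (auto simp: J0_ev mS 0)
    also have "\<dots> = smult (1/4) (pderiv (Tp 2))" using assms mS 0 by (subst sum_smult_delta) auto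
    also have "\<dots> = Tp m" using pderiv_Tp[of 1] by (simp add: mS 0 numeral_2_eq_2 of_nat_poly numeral_mult_conv_smult)
    finally show ?thesis .
  next
    case (Suc j)
    have "(\<Sum>k\<le>Suc B. smult (J0 (ev m) k) (pderiv (Tp k))) =
      (\<Sum>k\<le>Suc B. smult (if k = Suc m then 1 / (2 * real (Suc m)) else 0) (pderiv (Tp k)) +
         smult (if k = Suc j then - 1 / (2 * real (Suc j)) else 0) (pderiv (Tp k)))"
      by (rule sum.cong) (auto simp: J0_ev mS Suc)
    also have "\<dots> = smult (1 / (2 * real (Suc m))) (pderiv (Tp (Suc m))) + smult (- 1 / (2 * real (Suc j))) (pderiv (Tp (Suc j)))"
      using assms mS Suc by (simp add: sum.distrib sum_smult_delta del: Tp.simps) (metis le_SucE not_less_eq_eq)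
    also have "\<dots> = Tp m"
    proof -
      have u: "Up (Suc (Suc j)) - Up j = 2 * Tp (Suc (Suc j))" using UU_rel by blast
      have p1: "pderiv (Tp (Suc m)) = of_nat (Suc m) * Up m" using pderiv_Tp by blast
      have p2: "pderiv (Tp (Suc j)) = of_nat (Suc j) * Up j" using pderiv_Tp by blast
      have "smult (1 / (2 * real (Suc m))) (pderiv (Tp (Suc m))) + smult (- 1 / (2 * real (Suc j))) (pderiv (Tp (Suc j)))
          = smult (1/2) (Up (Suc (Suc j)) - Up j)"
        unfolding p1 p2 by (simp add: mS Suc of_nat_poly smult_diff_right del: of_nat_Suc)
      also have "\<dots> = Tp m" unfolding u by (simp add: mS Suc numeral_mult_conv_smult)
      finally show ?thesis .
    qed
    finally show ?thesis .
  qed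
qed

lemma smult_sum_r: "smult c (\<Sum>k\<in>S. f k) = (\<Sum>k\<in>S. smult c (f k))"
  by (induction S rule: infinite_finite_induct) (auto simp: smult_add_right)

lemma pderiv_sum: "pderiv (\<Sum>k\<in>S. f k) = (\<Sum>k\<in>S. pderiv (f k))"
  by (induction S rule: infinite_finite_induct) (auto simp: pderiv_add)

lemma J0_sum: "J0 (\<lambda>i. \<Sum>m\<in>S. c m * f m i) k = (\<Sum>m\<in>S. c m * J0 (f m) k)"
proof -
  have a: "(\<Sum>m\<in>S. c m * f m x) - (\<Sum>m\<in>S. c m * f m y) / z = (\<Sum>m\<in>S. c m * (f m x - f m y / z))" for x y z
    by (simp add: sum_subtractf sum_divide_distrib right_diff_distrib sum_distrib_left)
  have b: "((\<Sum>m\<in>S. c m * f m x) - (\<Sum>m\<in>S. c m * f m y)) / z = (\<Sum>m\<in>S. c m * ((f m x - f m y) / z))" for x y z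
    by (simp add: sum_subtractf[symmetric] sum_divide_distrib right_diff_distrib)
  show ?thesis unfolding J0_def using a b by simp
qed

lemma supp_expand: "supp_le v B \<Longrightarrow> v i = (\<Sum>m\<le>B. v m * ev m i)"
proof -
  assume s: "supp_le v B"
  have "(\<Sum>m\<le>B. v m * ev m i) = (\<Sum>m\<le>B. if m = i then v m else 0)"
    by (rule sum.cong) (auto simp: ev_def)
  also have "\<dots> = v i" using s unfolding supp_le_def by (subst sum.delta) (auto simp: not_le)
  finally show ?thesis by simp
qed

lemma J0_lin: "supp_le v B \<Longrightarrow> J0 v k = (\<Sum>m\<le>B. v m * J0 (ev m) k)"
proof -
  assume s: "supp_le v B"
  have "v = (\<lambda>i. \<Sum>m\<le>B. v m * ev m i)" by (rule ext) (rule supp_expand[OF s])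
  then have "J0 v k = J0 (\<lambda>i. \<Sum>m\<le>B. v m * ev m i) k" by simp
  also have "\<dots> = (\<Sum>m\<le>B. v m * J0 (ev m) k)" by (rule J0_sum)
  finally show ?thesis .
qed

lemma J0_supp: "supp_le v B \<Longrightarrow> supp_le (J0 v) (Suc B)"
  unfolding supp_le_def J0_def by auto

lemma Jv_supp: "supp_le v B \<Longrightarrow> supp_le (Jv v) (Suc B)"
  using J0_supp unfolding supp_le_def Jv_def by auto

lemma Jv_Suc: "Jv v (Suc k) = J0 v (Suc k)"
  by (simp add: Jv_def)

lemma J0_0: "J0 v 0 = 0"
  by (simp add: J0_def)

lemma Jv_deriv:
  assumes s: "supp_le v B"
  shows "pderiv (cfp (Suc B) (Jv v)) = cfp B v"
proof -
  have "pderiv (cfp (Suc B) (Jv v)) = (\<Sum>k\<le>Suc B. smult (Jv v k) (pderiv (Tp k)))"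
    unfolding cfp_def pderiv_sum pderiv_smult ..
  also have "\<dots> = (\<Sum>k\<le>Suc B. smult (J0 v k) (pderiv (Tp k)))"
  proof (rule sum.cong[OF refl])
    fix k show "smult (Jv v k) (pderiv (Tp k)) = smult (J0 v k) (pderiv (Tp k))"
      by (cases k) (simp_all only: Jv_Suc Tp.simps pderiv_1 smult_0_right)
  qed
  also have "\<dots> = (\<Sum>k\<le>Suc B. \<Sum>m\<le>B. smult (v m) (smult (J0 (ev m) k) (pderiv (Tp k))))"
    by (rule sum.cong[OF refl]) (simp only: J0_lin[OF s] smult_sum smult_smult)
  also have "\<dots> = (\<Sum>m\<le>B. smult (v m) (\<Sum>k\<le>Suc B. smult (J0 (ev m) k) (pderiv (Tp k))))"
    by (subst sum.swap) (simp only: smult_sum_r smult_smult)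
  also have "\<dots> = cfp B v"
    unfolding cfp_def
  proof (rule sum.cong[OF refl])
    fix m assume "m \<in> {..B}"
    then have m: "m \<le> B" by simp
    show "smult (v m) (\<Sum>k\<le>Suc B. smult (J0 (ev m) k) (pderiv (Tp k))) = smult (v m) (Tp m)"
      by (simp only: basis_deriv[OF m])
  qed
  finally show ?thesis .
qed

lemma Jv_m1:
  assumes s: "supp_le v B"
  shows "poly (cfp (Suc B) (Jv v)) (-1) = 0"
proof -
  have sub: "{i. J0 v i \<noteq> 0} \<subseteq> {..Suc B}"
    using J0_supp[OF s] unfolding supp_le_def by (auto simp: not_le[symmetric])
  have c: "Jv v 0 = - (\<Sum>i\<le>Suc B. J0 v i * (-1) ^ i)"
  proof -
    have "(\<Sum>i\<in>{i. J0 v i \<noteq> 0}. J0 v i * (-1) ^ i) = (\<Sum>i\<le>Suc B. J0 v i * (-1) ^ i)"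
      by (rule sum.mono_neutral_left) (use sub in auto)
    then show ?thesis unfolding Jv_def by simp
  qed
  have "poly (cfp (Suc B) (Jv v)) (-1) = (\<Sum>k\<le>Suc B. Jv v k * (-1) ^ k)"
    by (simp add: cfp_def poly_sum Tp_m1)
  also have "\<dots> = (\<Sum>k\<le>Suc B. J0 v k * (-1) ^ k + (if k = 0 then Jv v 0 else 0))"
  proof (rule sum.cong[OF refl])
    fix k show "Jv v k * (-1) ^ k = J0 v k * (-1) ^ k + (if k = 0 then Jv v 0 else 0)"
      by (cases k) (simp_all only: Jv_Suc J0_0 power_0 mult_1_right add_0_left if_True if_False nat.distinct add_0_right refl)
  qed
  also have "\<dots> = 0" by (simp add: sum.distrib c)
  finally show ?thesis .
qed

lemma ftc_poly: fixes a b :: real shows "a \<le> b \<Longrightarrow> ((\<lambda>t. poly (pderiv P) t) has_integral (poly P b - poly P a)) {a..b}"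
  by (rule fundamental_theorem_of_calculus[of a b "poly P" "poly (pderiv P)"])
     (auto simp: has_real_derivative_iff_has_vector_derivative[symmetric] intro: DERIV_subset[OF poly_DERIV])

lemma cauchy:
  fixes y :: real assumes y: "-1 \<le> y"
  shows "supp_le v B \<Longrightarrow> ((\<lambda>t. poly ([:y,-1:]^j * cfp B v) t) has_integral
      fact j * poly (cfp (B + j + 1) ((Jv ^^ Suc j) v)) y) {-1..y}"
proof (induction j arbitrary: v B)
  case 0
  have "((\<lambda>t. poly (pderiv (cfp (Suc B) (Jv v))) t) has_integral
      poly (cfp (Suc B) (Jv v)) y - poly (cfp (Suc B) (Jv v)) (-1)) {-1..y}"
    by (rule ftc_poly) (use y in simp)
  then show ?case using Jv_deriv[OF 0] Jv_m1[OF 0] by simp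
next
  case (Suc j)
  define u where "u = Jv v"
  define Pu where "Pu = cfp (Suc B) u"
  define Q where "Q = [:y,-1:]^(Suc j)"
  have su: "supp_le u (Suc B)" unfolding u_def by (rule Jv_supp[OF Suc.prems])
  have IH: "((\<lambda>t. poly ([:y,-1:]^j * Pu) t) has_integral
      fact j * poly (cfp (Suc B + j + 1) ((Jv ^^ Suc j) u)) y) {-1..y}"
    unfolding Pu_def by (rule Suc.IH[OF su])
  have F: "((\<lambda>t. poly (pderiv (Q * Pu)) t) has_integral poly (Q * Pu) y - poly (Q * Pu) (-1)) {-1..y}"
    by (rule ftc_poly) (use y in simp)
  have F0: "poly (Q * Pu) y - poly (Q * Pu) (-1) = 0"
    using Jv_m1[OF Suc.prems] unfolding Q_def Pu_def u_def by simp
  have dP: "pderiv Pu = cfp B v" unfolding Pu_def u_def by (rule Jv_deriv[OF Suc.prems])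
  have dQ: "pderiv Q = - smult (of_nat (Suc j)) ([:y,-1:]^j)"
    unfolding Q_def pderiv_power_Suc
    apply (simp add: pderiv_pCons)
    apply (simp only: smult_minus_left[symmetric])
    apply simp
    done
  have eq: "poly ([:y,-1:]^Suc j * cfp B v) t = poly (pderiv (Q * Pu)) t + of_nat (Suc j) * poly ([:y,-1:]^j * Pu) t" for t
    unfolding pderiv_mult dP dQ by (simp add: Q_def algebra_simps)
  have "((\<lambda>t. poly (pderiv (Q * Pu)) t + of_nat (Suc j) * poly ([:y,-1:]^j * Pu) t) has_integral
      0 + of_nat (Suc j) * (fact j * poly (cfp (Suc B + j + 1) ((Jv ^^ Suc j) u)) y)) {-1..y}"
    by (rule has_integral_add[OF F[unfolded F0] has_integral_mult_right[OF IH]])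
  moreover have "(Jv ^^ Suc j) u = (Jv ^^ Suc (Suc j)) v"
    unfolding u_def by (simp only: funpow_Suc_right o_def)
  moreover have "Suc B + j + 1 = B + Suc j + 1" by simp
  ultimately show ?case using eq by (simp add: algebra_simps)
qed

definition Av :: "(nat \<Rightarrow> real) \<Rightarrow> nat \<Rightarrow> real" where
  "Av v k = (if k = 0 then 0 else ((if k \<ge> 2 then v (k - 1) else 0) - v (k + 1)) / (2 * real k))"

definition aa :: "nat \<Rightarrow> nat \<Rightarrow> nat \<Rightarrow> real" where "aa r k n = (Av ^^ r) (ev n) k"

lemma Av_lin1: "Av (\<lambda>i. c1 * x i - c2 * y i) = (\<lambda>k. c1 * Av x k - c2 * Av y k)"
  by (rule ext) (simp add: Av_def diff_divide_distrib add_divide_distrib algebra_simps)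

lemma Av_lin: "(Av ^^ r) (\<lambda>i. c1 * x i - c2 * y i) = (\<lambda>k. c1 * (Av ^^ r) x k - c2 * (Av ^^ r) y k)"
proof (induction r)
  case 0 then show ?case by simp
next
  case (Suc r)
  have "(Av ^^ Suc r) (\<lambda>i. c1 * x i - c2 * y i) = Av ((Av ^^ r) (\<lambda>i. c1 * x i - c2 * y i))" by simp
  also have "\<dots> = Av (\<lambda>i. c1 * (Av ^^ r) x i - c2 * (Av ^^ r) y i)" by (simp only: Suc)
  also have "\<dots> = (\<lambda>k. c1 * (Av ^^ Suc r) x k - c2 * (Av ^^ Suc r) y k)" by (simp only: Av_lin1 funpow.simps o_def)
  finally show ?case .
qed

lemma Av_ev: "n \<ge> 1 \<Longrightarrow> Av (ev n) = (\<lambda>i. (1 / (2 * real (Suc n))) * ev (Suc n) i -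
    (if n \<ge> 2 then 1 / (2 * real (n - 1)) else 0) * ev (n - 1) i)"
  by (rule ext) (auto simp: Av_def ev_def)

lemma aa_left: "aa (Suc r) k n = (if k = 0 then 0 else ((if k \<ge> 2 then aa r (k - 1) n else 0) - aa r (k + 1) n) / (2 * real k))"
  unfolding aa_def by (simp add: Av_def)

lemma aa_right: "n \<ge> 1 \<Longrightarrow> aa (Suc r) k n = aa r k (Suc n) / (2 * real (Suc n)) -
    (if n \<ge> 2 then aa r k (n - 1) / (2 * real (n - 1)) else 0)"
proof -
  assume n: "n \<ge> 1"
  have "aa (Suc r) k n = (Av ^^ r) (Av (ev n)) k" unfolding aa_def by (simp only: funpow_Suc_right o_def)
  also have "\<dots> = (1 / (2 * real (Suc n))) * aa r k (Suc n) -
    (if n \<ge> 2 then 1 / (2 * real (n - 1)) else 0) * aa r k (n - 1)"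
    unfolding Av_ev[OF n] Av_lin aa_def ..
  finally show ?thesis by simp
qed

lemma arith_aux: fixes s G A1 A3 B1 B3 p q K :: real
 assumes "K \<noteq> 0" "p \<noteq> 0" "q \<noteq> 0" "-s*p*A1 = G*B1" "-s*q*A3 = G*B3"
 shows "(s*K) * ((A1 - A3)/(2*K)) = G * (B3/(2*q) - B1/(2*p))"
proof -
  have a: "s * A1 = - G * B1 / p" using assms by (simp add: field_simps)
  have b: "s * A3 = - G * B3 / q" using assms by (simp add: field_simps)
  have "(s*K) * ((A1 - A3)/(2*K)) = (s * A1 - s * A3) / 2" using assms by (simp add: field_simps)
  also have "\<dots> = G * (B3/(2*q) - B1/(2*p))" unfolding a b using assms by (simp add: field_simps)
  finally show ?thesis .
qed

definition gw :: "nat \<Rightarrow> real" where "gw k = (-1) ^ k * real k"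

lemma aa_sym: "k \<ge> 1 \<Longrightarrow> n \<ge> 1 \<Longrightarrow> gw k * aa r k n = gw n * aa r n k"
proof (induction r arbitrary: k n)
  case 0 then show ?case by (simp add: aa_def ev_def)
next
  case (Suc r)
  have R: "aa (Suc r) n k = aa r n (Suc k) / (2 * real (Suc k)) -
    (if k \<ge> 2 then aa r n (k - 1) / (2 * real (k - 1)) else 0)" by (rule aa_right) (use Suc in auto)
  show ?case
  proof (cases "k = 1")
    case True
    have i2: "gw (Suc (Suc 0)) * aa r (Suc (Suc 0)) n = gw n * aa r n (Suc (Suc 0))" by (rule Suc.IH) (use Suc in auto)
    have i2': "aa r (Suc (Suc 0)) n = gw n * aa r n (Suc (Suc 0)) / 2" using i2 by (simp add: gw_def)
    have R1: "aa (Suc r) n (Suc 0) = aa r n (Suc (Suc 0)) / 4" using R True by simp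
    have "gw k * aa (Suc r) k n = aa r (Suc (Suc 0)) n / 2" using True by (simp add: aa_left gw_def)
    also have "\<dots> = gw n * (aa r n (Suc (Suc 0)) / 4)" unfolding i2' by simp
    also have "\<dots> = gw n * aa (Suc r) n k" by (simp only: True One_nat_def R1)
    finally show ?thesis .
  next
    case False
    have k2: "k \<ge> 2" using False Suc.prems by simp
    define j where "j = k - 2"
    have kj: "k = Suc (Suc j)" using k2 unfolding j_def by simp
    have i1: "gw (Suc j) * aa r (Suc j) n = gw n * aa r n (Suc j)" by (rule Suc.IH) (use Suc in auto)
    have i3: "gw (Suc (Suc (Suc j))) * aa r (Suc (Suc (Suc j))) n = gw n * aa r n (Suc (Suc (Suc j)))"
      by (rule Suc.IH) (use Suc in auto)
    define s where "s = ((-1::real) ^ j)"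
    have gK: "gw (Suc (Suc j)) = s * real (Suc (Suc j))" by (simp add: gw_def s_def)
    have g1: "gw (Suc j) = - s * real (Suc j)" by (simp add: gw_def s_def)
    have g3: "gw (Suc (Suc (Suc j))) = - s * real (Suc (Suc (Suc j)))" by (simp add: gw_def s_def)
    have al: "aa (Suc r) (Suc (Suc j)) n = (aa r (Suc j) n - aa r (Suc (Suc (Suc j))) n) / (2 * real (Suc (Suc j)))"
      by (simp add: aa_left del: of_nat_Suc)
    have ar: "aa (Suc r) n (Suc (Suc j)) = aa r n (Suc (Suc (Suc j))) / (2 * real (Suc (Suc (Suc j)))) -
       aa r n (Suc j) / (2 * real (Suc j))"
      using R kj by (simp del: of_nat_Suc)
    have "gw k * aa (Suc r) k n = (s * real (Suc (Suc j))) * ((aa r (Suc j) n - aa r (Suc (Suc (Suc j))) n) / (2 * real (Suc (Suc j))))"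
      unfolding kj gK al ..
    also have "\<dots> = gw n * (aa r n (Suc (Suc (Suc j))) / (2 * real (Suc (Suc (Suc j)))) -
       aa r n (Suc j) / (2 * real (Suc j)))"
      by (rule arith_aux) (use i1 i3 g1 g3 in \<open>simp_all del: of_nat_Suc\<close>)
    also have "\<dots> = gw n * aa (Suc r) n k" unfolding kj ar ..
    finally show ?thesis .
  qed
qed

lemma J_A: "v 0 = 0 \<Longrightarrow> (\<forall>k\<ge>r. (Jv ^^ r) v k = (Av ^^ r) v k) \<and> (Av ^^ r) v 0 = 0"
proof (induction r)
  case 0 then show ?case by simp
next
  case (Suc r)
  have "(Jv ^^ Suc r) v k = (Av ^^ Suc r) v k" if k: "k \<ge> Suc r" for k
  proof (cases "k = 1")
    case True
    then have "r = 0" using k by simp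
    then show ?thesis using True Suc.prems by (simp add: Jv_def J0_def Av_def numeral_2_eq_2)
  next
    case False
    then have "k \<ge> 2" using k by simp
    then have k2: "k \<ge> 2" .
    have IH1: "(Jv ^^ r) v (k - 1) = (Av ^^ r) v (k - 1)" "(Jv ^^ r) v (k + 1) = (Av ^^ r) v (k + 1)"
      using Suc.IH[OF Suc.prems] k by auto
    have "(Jv ^^ Suc r) v k = Jv ((Jv ^^ r) v) k" by simp
    also have "\<dots> = ((Jv ^^ r) v (k - 1) - (Jv ^^ r) v (k + 1)) / (2 * real k)"
      unfolding Jv_def[of "(Jv ^^ r) v"] J0_def[of "(Jv ^^ r) v"] using k2 by simp
    also have "\<dots> = ((Av ^^ r) v (k - 1) - (Av ^^ r) v (k + 1)) / (2 * real k)" unfolding IH1 ..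
    also have "\<dots> = Av ((Av ^^ r) v) k"
      unfolding Av_def[of "(Av ^^ r) v"] using k2 by simp
    also have "\<dots> = (Av ^^ Suc r) v k" by simp
    finally show ?thesis .
  qed
  moreover have "(Av ^^ Suc r) v 0 = 0" by (simp add: Av_def[of "(Av ^^ r) v"])
  ultimately show ?case by blast
qed

lemma supp_ev: "supp_le (ev n) n"
  unfolding supp_le_def ev_def by auto

lemma supp_iter: "supp_le v B \<Longrightarrow> supp_le ((Jv ^^ r) v) (B + r)"
  by (induction r) (auto dest: Jv_supp)

lemma cfp_ext: "supp_le w B \<Longrightarrow> B \<le> B' \<Longrightarrow> cfp B' w = cfp B w"
  unfolding cfp_def supp_le_def by (rule sum.mono_neutral_right) auto

lemma cfp_ev: "cfp n (ev n) = Tp n"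
proof -
  have "cfp n (ev n) = (\<Sum>k\<le>n. if k = n then Tp k else 0)"
    unfolding cfp_def by (rule sum.cong) (auto simp: ev_def)
  also have "\<dots> = Tp n" by (subst sum.delta) auto
  finally show ?thesis .
qed

lemma fM_poly: "x \<in> {-1..1} \<Longrightarrow> fM a M x = poly (cfp M a) x"
  unfolding fM_def cfp_def by (simp add: poly_sum chebT_Tp)

lemma degree_cfp: "degree (cfp M a) \<le> M"
  unfolding cfp_def
  by (rule degree_sum_le) (auto intro: order.trans[OF degree_smult_le] order.trans[OF conjunct2[OF Tp_coeff]])

lemma uniq_poly: "(\<Sum>k\<le>D. smult (c k) (Tp k)) = 0 \<Longrightarrow> \<forall>k\<le>D. c k = 0"
proof (induction D)
  case 0 then show ?case by simp
next
  case (Suc D)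
  have e1: "coeff (\<Sum>k\<le>Suc D. smult (c k) (Tp k)) (Suc D) = (\<Sum>k\<le>D. c k * coeff (Tp k) (Suc D)) + c (Suc D) * coeff (Tp (Suc D)) (Suc D)"
    by (simp add: coeff_sum)
  have e2: "(\<Sum>k\<le>D. c k * coeff (Tp k) (Suc D)) = 0"
    by (rule sum.neutral) (auto simp: Tp_coeff_0)
  have e3: "coeff (\<Sum>k\<le>Suc D. smult (c k) (Tp k)) (Suc D) = 0" using Suc.prems by (simp only: coeff_0)
  have "c (Suc D) * coeff (Tp (Suc D)) (Suc D) = 0" using e1 e2 e3 by simp
  then have cS: "c (Suc D) = 0" using Tp_coeff_nz[of "Suc D"] by simp
  then have "(\<Sum>k\<le>D. smult (c k) (Tp k)) = 0" using Suc.prems by simp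
  then show ?case using Suc.IH cS by (auto simp: le_Suc_eq)
qed

lemma uniq:
  assumes "\<forall>y\<in>{-1..1}. (\<Sum>k\<le>D. c k * poly (Tp k) y) = (0::real)"
  shows "\<forall>k\<le>D. c k = 0"
proof -
  let ?P = "\<Sum>k\<le>D. smult (c k) (Tp k)"
  have "?P = 0"
  proof (rule ccontr)
    assume "?P \<noteq> 0"
    then have "finite {x. poly ?P x = 0}" by (rule poly_roots_finite)
    moreover have "{-1..1} \<subseteq> {x. poly ?P x = 0}" using assms by (auto simp: poly_sum)
    ultimately have "finite {-1..(1::real)}" by (rule finite_subset[rotated])
    then show False using infinite_Icc[of "-1::real" 1] by simp
  qed
  then show ?thesis by (rule uniq_poly)
qed

lemma fin_alg: fixes X Y :: real and n k :: nat
  assumes "n \<ge> 1" "(-1)^n * real n * X = (-1)^k * real k * Y"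
  shows "X = (-1)^(n+k) * real k / real n * Y"
proof -
  have s2: "(-1::real)^n * (-1)^n = 1" by (simp flip: power_mult_distrib)
  have "(-1)^(n+k) * real k / real n * Y = (-1)^n * ((-1)^k * real k * Y) / real n"
    by (simp add: power_add)
  also have "\<dots> = (-1)^n * ((-1)^n * real n * X) / real n" using assms(2) by simp
  also have "\<dots> = X" using s2 assms(1) by (simp add: field_simps)
  finally show ?thesis by simp
qed

theorem theorem3p4:
  fixes M N :: nat and a :: "nat \<Rightarrow> real" and R :: "nat \<Rightarrow> nat \<Rightarrow> real"
  assumes R_def: "\<forall>n\<le>N. \<forall>y\<in>{-1..1}.
      Rtilde a M n y = (\<Sum>k\<le>M+N+1. R k n * chebT k y)"
  shows "\<forall>k n. M + 1 \<le> k \<and> k \<le> N \<and> M + 1 \<le> n \<and> n \<le> N \<longrightarrow>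
      R n k = (-1) ^ (n + k) * real k / real n * R k n"
proof -
  define q where "q = pcompose (cfp M a) [:-1,1:]"
  define d where "d j = coeff q j" for j
  define w where "w n j = (Jv ^^ Suc j) (ev n)" for n j
  define W where "W n k = (\<Sum>j\<le>M. d j * fact j * w n j k)" for n k
  have degq: "degree q \<le> M" using degree_cfp[of M a] by (simp add: q_def degree_pcompose)
  have Rexp: "R k n = W n k" if n: "n \<le> N" and k: "k \<le> M + N + 1" for k n
  proof -
    have "\<forall>y\<in>{-1..1}. (\<Sum>k\<le>M+N+1. (R k n - W n k) * poly (Tp k) y) = 0"
    proof
      fix y :: real assume y: "y \<in> {-1..1}"
      have integrand: "fM a M (y - 1 - t) * chebT n t = (\<Sum>j\<le>M. d j * poly ([:y,-1:]^j * cfp n (ev n)) t)"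
        if t: "t \<in> {-1..y}" for t
      proof -
        have t1: "t \<in> {-1..1}" "y - 1 - t \<in> {-1..1}" using t y by auto
        have "fM a M (y - 1 - t) = poly q (y - t)" unfolding q_def using t1 by (simp add: fM_poly poly_pcompose) (simp add: algebra_simps)
        also have "\<dots> = (\<Sum>j\<le>M. d j * (y - t)^j)"
          by (subst poly_as_sum_of_monoms'[OF degq, symmetric]) (simp add: poly_sum poly_monom d_def)
        finally have f: "fM a M (y - 1 - t) = (\<Sum>j\<le>M. d j * (y - t)^j)" .
        show ?thesis using t1 by (simp add: f chebT_Tp cfp_ev poly_power sum_distrib_right mult.assoc)
      qed
      have hi: "((\<lambda>t. \<Sum>j\<le>M. d j * poly ([:y,-1:]^j * cfp n (ev n)) t) has_integral
          (\<Sum>j\<le>M. d j * (fact j * poly (cfp (n + j + 1) (w n j)) y))) {-1..y}"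
      proof (rule has_integral_sum)
        fix j assume "j \<in> {..M}"
        show "((\<lambda>t. d j * poly ([:y,-1:]^j * cfp n (ev n)) t) has_integral
          d j * (fact j * poly (cfp (n + j + 1) (w n j)) y)) {-1..y}"
          unfolding w_def by (rule has_integral_mult_right, rule cauchy) (use y supp_ev in auto)
      qed simp
      have "Rtilde a M n y = integral {-1..y} (\<lambda>t. \<Sum>j\<le>M. d j * poly ([:y,-1:]^j * cfp n (ev n)) t)"
        unfolding Rtilde_def by (rule integral_cong) (rule integrand)
      also have "\<dots> = (\<Sum>j\<le>M. d j * (fact j * poly (cfp (n + j + 1) (w n j)) y))"
        by (rule integral_unique[OF hi])
      also have "\<dots> = (\<Sum>j\<le>M. d j * (fact j * poly (cfp (M + N + 1) (w n j)) y))"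
      proof (rule sum.cong[OF refl])
        fix j assume j: "j \<in> {..M}"
        have "supp_le (w n j) (n + Suc j)" unfolding w_def by (rule supp_iter[OF supp_ev])
        then have "cfp (M + N + 1) (w n j) = cfp (n + Suc j) (w n j)"
          by (rule cfp_ext) (use j n in auto)
        then show "d j * (fact j * poly (cfp (n + j + 1) (w n j)) y) = d j * (fact j * poly (cfp (M + N + 1) (w n j)) y)"
          by simp
      qed
      also have "\<dots> = (\<Sum>j\<le>M. \<Sum>k\<le>M + N + 1. d j * fact j * w n j k * poly (Tp k) y)"
        unfolding cfp_def poly_sum poly_smult sum_distrib_left by (simp add: mult.assoc)
      also have "\<dots> = (\<Sum>k\<le>M + N + 1. W n k * poly (Tp k) y)"
        unfolding W_def sum_distrib_right by (rule sum.swap)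
      finally have A: "Rtilde a M n y = (\<Sum>k\<le>M + N + 1. W n k * poly (Tp k) y)" .
      have B: "Rtilde a M n y = (\<Sum>k\<le>M + N + 1. R k n * poly (Tp k) y)"
        using R_def n y by (simp add: chebT_Tp)
      show "(\<Sum>k\<le>M+N+1. (R k n - W n k) * poly (Tp k) y) = 0"
        using A B by (simp add: left_diff_distrib sum_subtractf)
    qed
    from uniq[OF this] k show ?thesis by simp
  qed
  have wa: "w n j k = aa (Suc j) k n" if "1 \<le> n" "Suc j \<le> k" for n j k
  proof -
    have "ev n 0 = 0" using that by (simp add: ev_def)
    from J_A[of "ev n" "Suc j", OF this] that show ?thesis unfolding w_def aa_def by blast
  qed
  show ?thesis
  proof (intro allI impI)
    fix k n assume h: "M + 1 \<le> k \<and> k \<le> N \<and> M + 1 \<le> n \<and> n \<le> N"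
    have "R k n = W n k" by (rule Rexp) (use h in auto)
    also have "\<dots> = (\<Sum>j\<le>M. d j * fact j * aa (Suc j) k n)"
      unfolding W_def using h by (intro sum.cong refl) (auto simp: wa)
    finally have Rkn: "R k n = (\<Sum>j\<le>M. d j * fact j * aa (Suc j) k n)" .
    have "R n k = W k n" by (rule Rexp) (use h in auto)
    also have "\<dots> = (\<Sum>j\<le>M. d j * fact j * aa (Suc j) n k)"
      unfolding W_def using h by (intro sum.cong refl) (auto simp: wa)
    finally have Rnk: "R n k = (\<Sum>j\<le>M. d j * fact j * aa (Suc j) n k)" .
    have "gw n * R n k = gw k * R k n"
      unfolding Rkn Rnk sum_distrib_left
    proof (rule sum.cong[OF refl])
      fix j
      have "gw k * aa (Suc j) k n = gw n * aa (Suc j) n k" by (rule aa_sym) (use h in auto)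
      then show "gw n * (d j * fact j * aa (Suc j) n k) = gw k * (d j * fact j * aa (Suc j) k n)"
        by (simp add: algebra_simps)
    qed
    then show "R n k = (-1) ^ (n + k) * real k / real n * R k n"
      by (intro fin_alg) (use h in \<open>auto simp: gw_def\<close>)
  qed
qed

end
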